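(* Let $R$ be an associative commutative ring with identity, $f=\frac{1}{1-X}\in R[[X]]$, and for $h\in R[[X]]$ let $\alpha[h]:g\mapsto h+g$ and $\mu[h]:g\mapsto hg$ be maps $R[[X]]\to R[[X]]$. Let $K$ be the group (under composition) generated by $\{\alpha[sf],\mu[f]\mid s\in R\}$ and let $L$ be the group generated by the maps $\{\,g\mapsto f\cdot(s+g)\mid s\in R\,\}$ (i.e. $\mu[f]\circ\alpha[s]$). Then $K=L$.
   Context: $R[[X]]$ is the ring of formal power series over $R$; $f=\sum_{k\ge0}X^k$ is invertible in $R[[X]]$, so all the listed maps are bijections of $R[[X]]$. *)

theory Defs
  imports "HOL-Algebra.Bij" "HOL-Algebra.Generated_Groups" "HOL-Computational_Algebra.Formal_Power_Series"
begin

text \<open>f = sum of X^k = 1/(1-X) in R[[X]]\<close>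
definition geom_fps :: "'a::comm_ring_1 fps" where
  "geom_fps = Abs_fps (\<lambda>_. 1)"

definition fps_add_map :: "'a::comm_ring_1 fps \<Rightarrow> 'a fps \<Rightarrow> 'a fps" where
  "fps_add_map h = (\<lambda>g. h + g)"

definition fps_mult_map :: "'a::comm_ring_1 fps \<Rightarrow> 'a fps \<Rightarrow> 'a fps" where
  "fps_mult_map h = (\<lambda>g. h * g)"

end

theory Submission
  imports Defs
begin

lemma geom_inv: "geom_fps * (1 - fps_X) = (1 :: 'a::comm_ring_1 fps)"
  by (rule fps_ext) (simp add: geom_fps_def algebra_simps)

lemma Bij_UNIV_iff: "(x \<in> Bij (UNIV::'b set)) = bij x"
  by (simp add: Bij_def extensional_def)

lemma BG_carrier: "carrier (BijGroup (UNIV::'b set)) = {x. bij x}"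
  by (auto simp: BijGroup_def Bij_UNIV_iff)

lemma BG_mult: "bij x \<Longrightarrow> bij y \<Longrightarrow> x \<otimes>\<^bsub>BijGroup (UNIV::'b set)\<^esub> y = x \<circ> y"
  by (auto simp: BijGroup_def Bij_UNIV_iff compose_def)

lemma BG_one: "\<one>\<^bsub>BijGroup (UNIV::'b set)\<^esub> = id"
  by (auto simp: BijGroup_def)

lemma bij_add: "bij (fps_add_map (h::'a::comm_ring_1 fps))"
  unfolding fps_add_map_def
proof (rule bijI)
  show "inj (\<lambda>g. h + g)" by (rule injI) simp
  show "surj (\<lambda>g. h + g)" by (rule surjI[of _ "\<lambda>g. g - h"]) simp
qed

lemma mu_nu: "fps_mult_map (geom_fps::'a::comm_ring_1 fps) \<circ> fps_mult_map (1 - fps_X) = id"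
  "fps_mult_map (1 - fps_X) \<circ> fps_mult_map (geom_fps::'a::comm_ring_1 fps) = id"
proof -
  have "geom_fps * ((1 - fps_X) * g) = g" "(1 - fps_X) * (geom_fps * g) = g" for g :: "'a fps"
    by (simp_all add: mult.assoc[symmetric] geom_inv mult.commute[of "1 - fps_X" geom_fps])
  then show "fps_mult_map (geom_fps::'a::comm_ring_1 fps) \<circ> fps_mult_map (1 - fps_X) = id"
    "fps_mult_map (1 - fps_X) \<circ> fps_mult_map (geom_fps::'a::comm_ring_1 fps) = id"
    by (auto simp: fps_mult_map_def)
qed

lemma bij_mu: "bij (fps_mult_map (geom_fps::'a::comm_ring_1 fps))"
  using mu_nu by (metis o_bij)

lemma bij_nu: "bij (fps_mult_map (1 - fps_X::'a::comm_ring_1 fps))"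
  using mu_nu by (metis o_bij)

theorem lemma8p1:
  "generate (BijGroup (UNIV :: 'a::comm_ring_1 fps set))
      ({fps_add_map (fps_const s * geom_fps) | s. True} \<union> {fps_mult_map geom_fps})
   = generate (BijGroup (UNIV :: 'a fps set))
      {fps_mult_map geom_fps \<circ> fps_add_map (fps_const s) | s. True}"
  (is "generate ?G ?A = generate ?G ?B")
proof -
  let ?mu = "fps_mult_map (geom_fps::'a fps)"
  let ?nu = "fps_mult_map (1 - fps_X::'a fps)"
  interpret G: group ?G by (rule group_BijGroup)
  have Acar: "?A \<subseteq> carrier ?G" using bij_add bij_mu by (auto simp: BG_carrier)
  have Bcar: "?B \<subseteq> carrier ?G" using bij_add bij_mu by (auto simp: BG_carrier intro: bij_comp)
  have eq1: "?mu \<circ> fps_add_map (fps_const s) = fps_add_map (fps_const s * geom_fps) \<circ> ?mu" for s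
    by (auto simp: fps_add_map_def fps_mult_map_def algebra_simps)
  have eq2: "fps_add_map (fps_const s * geom_fps) = (?mu \<circ> fps_add_map (fps_const s)) \<circ> ?nu" for s
  proof
    fix g :: "'a fps"
    have "geom_fps * (fps_const s + (1 - fps_X) * g) = fps_const s * geom_fps + (geom_fps * (1 - fps_X)) * g"
      by (simp only: distrib_left mult.assoc[symmetric] mult.commute[of geom_fps "fps_const s"])
    then show "fps_add_map (fps_const s * geom_fps) g = ((?mu \<circ> fps_add_map (fps_const s)) \<circ> ?nu) g"
      by (simp add: fps_add_map_def fps_mult_map_def geom_inv)
  qed
  have mu0: "?mu = ?mu \<circ> fps_add_map (fps_const 0)"
    by (auto simp: fps_add_map_def)
  have invmu: "inv\<^bsub>?G\<^esub> ?mu = ?nu"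
    by (rule G.inv_equality) (auto simp: BG_carrier BG_mult BG_one bij_mu bij_nu mu_nu)
  have "?B \<subseteq> generate ?G ?A"
  proof
    fix x assume "x \<in> ?B"
    then obtain s where x: "x = ?mu \<circ> fps_add_map (fps_const s)" by auto
    have "fps_add_map (fps_const s * geom_fps) \<otimes>\<^bsub>?G\<^esub> ?mu \<in> generate ?G ?A"
      by (intro generate.eng generate.incl) auto
    then show "x \<in> generate ?G ?A" using x eq1 by (simp add: BG_mult bij_add bij_mu)
  qed
  hence 1: "generate ?G ?B \<subseteq> generate ?G ?A"
    by (intro G.generate_subgroup_incl G.generate_is_subgroup Acar)
  have mug: "?mu \<in> generate ?G ?B" by (rule generate.incl, rule CollectI, rule exI[of _ 0], use mu0 in simp)
  have "?A \<subseteq> generate ?G ?B"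
  proof
    fix x assume "x \<in> ?A"
    then consider s where "x = fps_add_map (fps_const s * geom_fps)" | "x = ?mu" by auto
    then show "x \<in> generate ?G ?B"
    proof cases
      case (1 s)
      have "(?mu \<circ> fps_add_map (fps_const s)) \<otimes>\<^bsub>?G\<^esub> inv\<^bsub>?G\<^esub> ?mu \<in> generate ?G ?B"
        by (rule generate.eng, rule generate.incl, blast,
            rule subgroup.m_inv_closed[OF G.generate_is_subgroup[OF Bcar] mug])
      then show ?thesis using 1 eq2 invmu
        by (simp add: BG_mult bij_add bij_mu bij_nu bij_comp)
    qed (use mug in auto)
  qed
  hence 2: "generate ?G ?A \<subseteq> generate ?G ?B"
    by (intro G.generate_subgroup_incl G.generate_is_subgroup Bcar)
  show ?thesis using 1 2 by blast
qed

end
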